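(* Let $I=[-1,1]$ be a parametrised interval object in a category $\mathcal{C}$ with finite products, with negation $-\colon I\to I$ (the unique midpoint endomorphism with $-(1)=-1$, $-(-1)=1$) and $0=-1\oplus 1$. Then there is a unique map $(x,y)\mapsto x\cdot y\colon I\times I\to I$ such that $x\cdot(-1)=-x$, $x\cdot 1=x$ and $x\cdot(y\oplus z)=(x\cdot y)\oplus(x\cdot z)$. Moreover, this map satisfies $x\cdot 0=0$, $x\cdot y=y\cdot x$ and $(x\cdot y)\cdot z=x\cdot(y\cdot z)$.
   Context: Equations are between generalised elements. A midpoint object is $(A,m)$ with $m\colon A\times A\to A$ satisfying $m(x,x)=x$, $m(x,y)=m(y,x)$, $m(m(x,y),m(z,w))=m(m(x,z),m(y,w))$; cancellative if $m(x,y)=m(x,z)$ implies $y=z$; iterative if for every $c\colon X\to A\times X$ there is a unique $u\colon X\to A$ with $m\circ(\mathrm{id}\times u)\circ c=u$. An m-convex body is a cancellative iterative midpoint object. A parametrised interval object is an m-convex body $(I,\oplus)$ with global points $a,b$ (here $-1,1$) such that for every object $P$, every m-convex body $(A,m)$ and maps $x_a,x_b\colon P\to A$ there is a unique map $h\colon P\times I\to A$ with $h(p,a)=x_a(p)$, $h(p,b)=x_b(p)$ and $h(p,x\oplus y)=m(h(p,x),h(p,y))$. *)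

theory Defs
  imports Main
begin

text \<open>Objects are the elements of type 'o; arrows are the elements of type 'm satisfying carr.
 ccomp g f is the composite g after f.\<close>

record ('o,'m) cat_fp =
  cdom  :: "'m \<Rightarrow> 'o"
  ccod  :: "'m \<Rightarrow> 'o"
  carr  :: "'m \<Rightarrow> bool"
  ccomp :: "'m \<Rightarrow> 'm \<Rightarrow> 'm"
  cid   :: "'o \<Rightarrow> 'm"
  cterm :: "'o"
  cbang :: "'o \<Rightarrow> 'm"
  cprod :: "'o \<Rightarrow> 'o \<Rightarrow> 'o"
  cfst  :: "'o \<Rightarrow> 'o \<Rightarrow> 'm"
  csnd  :: "'o \<Rightarrow> 'o \<Rightarrow> 'm"
  cpair :: "'m \<Rightarrow> 'm \<Rightarrow> 'm"

definition hom :: "('o,'m,'x) cat_fp_scheme \<Rightarrow> 'm \<Rightarrow> 'o \<Rightarrow> 'o \<Rightarrow> bool" where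
  "hom C f X Y \<longleftrightarrow> carr C f \<and> cdom C f = X \<and> ccod C f = Y"

definition cat_fp :: "('o,'m,'x) cat_fp_scheme \<Rightarrow> bool" where
  "cat_fp C \<longleftrightarrow>
     (\<forall>X. hom C (cid C X) X X) \<and>
     (\<forall>f g. carr C f \<and> carr C g \<and> ccod C f = cdom C g \<longrightarrow>
              hom C (ccomp C g f) (cdom C f) (ccod C g)) \<and>
     (\<forall>f. carr C f \<longrightarrow> ccomp C f (cid C (cdom C f)) = f \<and> ccomp C (cid C (ccod C f)) f = f) \<and>
     (\<forall>f g h. carr C f \<and> carr C g \<and> carr C h \<and> ccod C f = cdom C g \<and> ccod C g = cdom C h \<longrightarrow>
              ccomp C h (ccomp C g f) = ccomp C (ccomp C h g) f) \<and>
     (\<forall>X. hom C (cbang C X) X (cterm C)) \<and>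
     (\<forall>X f. hom C f X (cterm C) \<longrightarrow> f = cbang C X) \<and>
     (\<forall>X Y. hom C (cfst C X Y) (cprod C X Y) X \<and> hom C (csnd C X Y) (cprod C X Y) Y) \<and>
     (\<forall>Z X Y f g. hom C f Z X \<and> hom C g Z Y \<longrightarrow>
          hom C (cpair C f g) Z (cprod C X Y) \<and>
          ccomp C (cfst C X Y) (cpair C f g) = f \<and>
          ccomp C (csnd C X Y) (cpair C f g) = g \<and>
          (\<forall>h. hom C h Z (cprod C X Y) \<and> ccomp C (cfst C X Y) h = f \<and>
                ccomp C (csnd C X Y) h = g \<longrightarrow> h = cpair C f g))"

definition mid :: "('o,'m,'x) cat_fp_scheme \<Rightarrow> 'm \<Rightarrow> 'm \<Rightarrow> 'm \<Rightarrow> 'm" where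
  "mid C m x y = ccomp C m (cpair C x y)"

text \<open>A global point a : 1 -> A viewed as a generalised element at stage X.\<close>
definition cst :: "('o,'m,'x) cat_fp_scheme \<Rightarrow> 'm \<Rightarrow> 'o \<Rightarrow> 'm" where
  "cst C a X = ccomp C a (cbang C X)"

definition midpoint_obj :: "('o,'m,'x) cat_fp_scheme \<Rightarrow> 'o \<Rightarrow> 'm \<Rightarrow> bool" where
  "midpoint_obj C A m \<longleftrightarrow> hom C m (cprod C A A) A \<and>
     (\<forall>X x y z w. hom C x X A \<and> hom C y X A \<and> hom C z X A \<and> hom C w X A \<longrightarrow>
        mid C m x x = x \<and>
        mid C m x y = mid C m y x \<and>
        mid C m (mid C m x y) (mid C m z w) = mid C m (mid C m x z) (mid C m y w))"

definition cancellative :: "('o,'m,'x) cat_fp_scheme \<Rightarrow> 'o \<Rightarrow> 'm \<Rightarrow> bool" where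
  "cancellative C A m \<longleftrightarrow>
     (\<forall>X x y z. hom C x X A \<and> hom C y X A \<and> hom C z X A \<and> mid C m x y = mid C m x z \<longrightarrow> y = z)"

definition iterative :: "('o,'m,'x) cat_fp_scheme \<Rightarrow> 'o \<Rightarrow> 'm \<Rightarrow> bool" where
  "iterative C A m \<longleftrightarrow>
     (\<forall>X c. hom C c X (cprod C A X) \<longrightarrow>
        (\<exists>!u. hom C u X A \<and>
           ccomp C m (ccomp C (cpair C (cfst C A X) (ccomp C u (csnd C A X))) c) = u))"

definition mconvex_body :: "('o,'m,'x) cat_fp_scheme \<Rightarrow> 'o \<Rightarrow> 'm \<Rightarrow> bool" where
  "mconvex_body C A m \<longleftrightarrow> midpoint_obj C A m \<and> cancellative C A m \<and> iterative C A m"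

definition param_interval :: "('o,'m,'x) cat_fp_scheme \<Rightarrow> 'o \<Rightarrow> 'm \<Rightarrow> 'm \<Rightarrow> 'm \<Rightarrow> bool" where
  "param_interval C I op a b \<longleftrightarrow>
     mconvex_body C I op \<and> hom C a (cterm C) I \<and> hom C b (cterm C) I \<and>
     (\<forall>P A m xa xb. mconvex_body C A m \<and> hom C xa P A \<and> hom C xb P A \<longrightarrow>
        (\<exists>!h. hom C h (cprod C P I) A \<and>
           (\<forall>X p. hom C p X P \<longrightarrow>
               ccomp C h (cpair C p (cst C a X)) = ccomp C xa p \<and>
               ccomp C h (cpair C p (cst C b X)) = ccomp C xb p) \<and>
           (\<forall>X p x y. hom C p X P \<and> hom C x X I \<and> hom C y X I \<longrightarrow>
               ccomp C h (cpair C p (mid C op x y)) =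
               mid C m (ccomp C h (cpair C p x)) (ccomp C h (cpair C p y)))))"

definition is_negation :: "('o,'m,'x) cat_fp_scheme \<Rightarrow> 'o \<Rightarrow> 'm \<Rightarrow> 'm \<Rightarrow> 'm \<Rightarrow> 'm \<Rightarrow> bool" where
  "is_negation C I op a b neg \<longleftrightarrow> hom C neg I I \<and>
     (\<forall>X x y. hom C x X I \<and> hom C y X I \<longrightarrow>
        ccomp C neg (mid C op x y) = mid C op (ccomp C neg x) (ccomp C neg y)) \<and>
     ccomp C neg b = a \<and> ccomp C neg a = b"

end

theory Submission imports Defs begin

locale catL = fixes C :: "('o,'m) cat_fp" assumes cat: "cat_fp C"
begin

lemma c_id: "carr C (cid C X)" "cdom C (cid C X) = X" "ccod C (cid C X) = X"
  using cat by (auto simp: cat_fp_def hom_def)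

lemma cat2: "\<And>f g. carr C f \<Longrightarrow> carr C g \<Longrightarrow> ccod C f = cdom C g \<Longrightarrow>
              hom C (ccomp C g f) (cdom C f) (ccod C g)"
  and cat3: "\<And>f. carr C f \<Longrightarrow> ccomp C f (cid C (cdom C f)) = f \<and> ccomp C (cid C (ccod C f)) f = f"
  and cat4: "\<And>f g h. carr C f \<Longrightarrow> carr C g \<Longrightarrow> carr C h \<Longrightarrow> ccod C f = cdom C g \<Longrightarrow> ccod C g = cdom C h \<Longrightarrow>
              ccomp C h (ccomp C g f) = ccomp C (ccomp C h g) f"
proof -
  have "(\<forall>f g. carr C f \<and> carr C g \<and> ccod C f = cdom C g \<longrightarrow>
              hom C (ccomp C g f) (cdom C f) (ccod C g))" using cat unfolding cat_fp_def by (elim conjE)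
  then show "\<And>f g. carr C f \<Longrightarrow> carr C g \<Longrightarrow> ccod C f = cdom C g \<Longrightarrow>
              hom C (ccomp C g f) (cdom C f) (ccod C g)" by blast
  have "(\<forall>f. carr C f \<longrightarrow> ccomp C f (cid C (cdom C f)) = f \<and> ccomp C (cid C (ccod C f)) f = f)"
    using cat unfolding cat_fp_def by (elim conjE)
  then show "\<And>f. carr C f \<Longrightarrow> ccomp C f (cid C (cdom C f)) = f \<and> ccomp C (cid C (ccod C f)) f = f" by blast
  have "(\<forall>f g h. carr C f \<and> carr C g \<and> carr C h \<and> ccod C f = cdom C g \<and> ccod C g = cdom C h \<longrightarrow>
              ccomp C h (ccomp C g f) = ccomp C (ccomp C h g) f)"
    using cat unfolding cat_fp_def by (elim conjE)
  then show "\<And>f g h. carr C f \<Longrightarrow> carr C g \<Longrightarrow> carr C h \<Longrightarrow> ccod C f = cdom C g \<Longrightarrow> ccod C g = cdom C h \<Longrightarrow>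
              ccomp C h (ccomp C g f) = ccomp C (ccomp C h g) f" by blast
qed

lemma c_comp: "carr C f \<Longrightarrow> carr C g \<Longrightarrow> ccod C f = cdom C g \<Longrightarrow> carr C (ccomp C g f)"
  "carr C f \<Longrightarrow> carr C g \<Longrightarrow> ccod C f = cdom C g \<Longrightarrow> cdom C (ccomp C g f) = cdom C f"
  "carr C f \<Longrightarrow> carr C g \<Longrightarrow> ccod C f = cdom C g \<Longrightarrow> ccod C (ccomp C g f) = ccod C g"
  using cat2 unfolding hom_def by blast+

lemma c_idl: "carr C f \<Longrightarrow> ccod C f = X \<Longrightarrow> ccomp C (cid C X) f = f"
  and c_idr: "carr C f \<Longrightarrow> cdom C f = X \<Longrightarrow> ccomp C f (cid C X) = f"
  using cat3 by blast+

lemma c_assoc: "carr C f \<Longrightarrow> carr C g \<Longrightarrow> carr C h \<Longrightarrow> ccod C f = cdom C g \<Longrightarrow> ccod C g = cdom C h \<Longrightarrow>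
   ccomp C (ccomp C h g) f = ccomp C h (ccomp C g f)"
  using cat4 by metis

lemma c_bang: "carr C (cbang C X)" "cdom C (cbang C X) = X" "ccod C (cbang C X) = cterm C"
  using cat by (auto simp: cat_fp_def hom_def)

lemma c_bang_uniq: "hom C f X (cterm C) \<Longrightarrow> f = cbang C X"
  using cat by (auto simp: cat_fp_def)

lemma c_fst: "carr C (cfst C X Y)" "cdom C (cfst C X Y) = cprod C X Y" "ccod C (cfst C X Y) = X"
  using cat by (auto simp: cat_fp_def hom_def)
lemma c_snd: "carr C (csnd C X Y)" "cdom C (csnd C X Y) = cprod C X Y" "ccod C (csnd C X Y) = Y"
  using cat by (auto simp: cat_fp_def hom_def)

lemma c_pair_all: "carr C f \<Longrightarrow> carr C g \<Longrightarrow> cdom C f = cdom C g \<Longrightarrow>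
  hom C (cpair C f g) (cdom C f) (cprod C (ccod C f) (ccod C g)) \<and>
  ccomp C (cfst C (ccod C f) (ccod C g)) (cpair C f g) = f \<and>
  ccomp C (csnd C (ccod C f) (ccod C g)) (cpair C f g) = g \<and>
  (\<forall>h. hom C h (cdom C f) (cprod C (ccod C f) (ccod C g)) \<and> ccomp C (cfst C (ccod C f) (ccod C g)) h = f \<and>
                ccomp C (csnd C (ccod C f) (ccod C g)) h = g \<longrightarrow> h = cpair C f g)"
proof -
  assume "carr C f" "carr C g" "cdom C f = cdom C g"
  then have "hom C f (cdom C f) (ccod C f)" "hom C g (cdom C f) (ccod C g)" by (auto simp: hom_def)
  then show ?thesis using cat unfolding cat_fp_def by blast
qed

lemma c_pair: "carr C f \<Longrightarrow> carr C g \<Longrightarrow> cdom C f = cdom C g \<Longrightarrow> carr C (cpair C f g)"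
  "carr C f \<Longrightarrow> carr C g \<Longrightarrow> cdom C f = cdom C g \<Longrightarrow> cdom C (cpair C f g) = cdom C f"
  "carr C f \<Longrightarrow> carr C g \<Longrightarrow> cdom C f = cdom C g \<Longrightarrow> ccod C (cpair C f g) = cprod C (ccod C f) (ccod C g)"
  using c_pair_all unfolding hom_def by blast+

lemma c_fst_pair: "carr C f \<Longrightarrow> carr C g \<Longrightarrow> cdom C f = cdom C g \<Longrightarrow> ccod C f = X \<Longrightarrow> ccod C g = Y \<Longrightarrow>
   ccomp C (cfst C X Y) (cpair C f g) = f"
  and c_snd_pair: "carr C f \<Longrightarrow> carr C g \<Longrightarrow> cdom C f = cdom C g \<Longrightarrow> ccod C f = X \<Longrightarrow> ccod C g = Y \<Longrightarrow>
   ccomp C (csnd C X Y) (cpair C f g) = g"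
  using c_pair_all by blast+

lemmas cs0 = c_id c_comp c_bang c_fst c_snd c_pair

lemma c_bang_comp: "carr C k \<Longrightarrow> ccod C k = X \<Longrightarrow> ccomp C (cbang C X) k = cbang C (cdom C k)"
  by (rule c_bang_uniq) (simp add: hom_def cs0)

lemma c_pair_comp: "carr C f \<Longrightarrow> carr C g \<Longrightarrow> carr C k \<Longrightarrow> cdom C f = cdom C g \<Longrightarrow> ccod C k = cdom C f \<Longrightarrow>
  ccomp C (cpair C f g) k = cpair C (ccomp C f k) (ccomp C g k)"
proof -
  assume h: "carr C f" "carr C g" "carr C k" "cdom C f = cdom C g" "ccod C k = cdom C f"
  have 1: "ccomp C (cfst C (ccod C f) (ccod C g)) (ccomp C (cpair C f g) k) = ccomp C f k"
    using h by (simp add: c_assoc[symmetric] cs0 c_fst_pair)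
  have 2: "ccomp C (csnd C (ccod C f) (ccod C g)) (ccomp C (cpair C f g) k) = ccomp C g k"
    using h by (simp add: c_assoc[symmetric] cs0 c_snd_pair)
  show ?thesis
    using c_pair_all[of "ccomp C f k" "ccomp C g k"] h 1 2 by (simp add: cs0 hom_def)
qed

lemma c_cst: "carr C a \<Longrightarrow> cdom C a = cterm C \<Longrightarrow> carr C (cst C a X)"
  "carr C a \<Longrightarrow> cdom C a = cterm C \<Longrightarrow> cdom C (cst C a X) = X"
  "carr C a \<Longrightarrow> cdom C a = cterm C \<Longrightarrow> ccod C (cst C a X) = ccod C a"
  by (simp_all add: cst_def cs0)

lemma c_cst_comp: "carr C a \<Longrightarrow> cdom C a = cterm C \<Longrightarrow> carr C k \<Longrightarrow> ccod C k = X \<Longrightarrow>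
  ccomp C (cst C a X) k = cst C a (cdom C k)"
  by (simp add: cst_def c_assoc cs0 c_bang_comp)

lemma c_comp_cst: "carr C a \<Longrightarrow> cdom C a = cterm C \<Longrightarrow> carr C f \<Longrightarrow> ccod C a = cdom C f \<Longrightarrow>
  ccomp C f (cst C a X) = cst C (ccomp C f a) X"
  by (simp add: cst_def c_assoc cs0)

lemma c_mid: "carr C m \<Longrightarrow> carr C x \<Longrightarrow> carr C y \<Longrightarrow> cdom C x = cdom C y \<Longrightarrow> cdom C m = cprod C (ccod C x) (ccod C y) \<Longrightarrow> carr C (mid C m x y)"
  "carr C m \<Longrightarrow> carr C x \<Longrightarrow> carr C y \<Longrightarrow> cdom C x = cdom C y \<Longrightarrow> cdom C m = cprod C (ccod C x) (ccod C y) \<Longrightarrow> cdom C (mid C m x y) = cdom C x"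
  "carr C m \<Longrightarrow> carr C x \<Longrightarrow> carr C y \<Longrightarrow> cdom C x = cdom C y \<Longrightarrow> cdom C m = cprod C (ccod C x) (ccod C y) \<Longrightarrow> ccod C (mid C m x y) = ccod C m"
  unfolding mid_def by (simp_all add: cs0)

lemma c_mid_comp: "carr C m \<Longrightarrow> carr C x \<Longrightarrow> carr C y \<Longrightarrow> cdom C x = cdom C y \<Longrightarrow> cdom C m = cprod C (ccod C x) (ccod C y) \<Longrightarrow>
  carr C k \<Longrightarrow> ccod C k = cdom C x \<Longrightarrow> ccomp C (mid C m x y) k = mid C m (ccomp C x k) (ccomp C y k)"
  by (simp add: mid_def c_assoc cs0 c_pair_comp)

lemmas cs = cs0 c_cst c_mid c_idl c_idr c_assoc c_fst_pair c_snd_pair c_bang_comp c_pair_comp c_cst_comp c_comp_cst c_mid_comp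

end

definition natural :: "('o,'m) cat_fp \<Rightarrow> 'o \<Rightarrow> 'o \<Rightarrow> 'o \<Rightarrow> ('m \<Rightarrow> 'm \<Rightarrow> 'm) \<Rightarrow> bool" where
  "natural C I P A F \<longleftrightarrow> (\<forall>Y p x. hom C p Y P \<and> hom C x Y I \<longrightarrow> hom C (F p x) Y A) \<and>
     (\<forall>Y Z p x k. hom C p Y P \<and> hom C x Y I \<and> hom C k Z Y \<longrightarrow> ccomp C (F p x) k = F (ccomp C p k) (ccomp C x k))"

locale L = catL C for C :: "('o,'m) cat_fp" +
  fixes I :: 'o and op a b neg :: 'm
  assumes PI: "param_interval C I op a b" and NG: "is_negation C I op a b neg"
begin

lemma op_t: "carr C op" "cdom C op = cprod C I I" "ccod C op = I"
  using PI by (auto simp: param_interval_def mconvex_body_def midpoint_obj_def hom_def)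
lemma a_t: "carr C a" "cdom C a = cterm C" "ccod C a = I"
  using PI by (auto simp: param_interval_def hom_def)
lemma b_t: "carr C b" "cdom C b = cterm C" "ccod C b = I"
  using PI by (auto simp: param_interval_def hom_def)
lemma neg_t: "carr C neg" "cdom C neg = I" "ccod C neg = I"
  using NG by (auto simp: is_negation_def hom_def)
lemma neg_ab: "ccomp C neg a = b" "ccomp C neg b = a"
  using NG by (auto simp: is_negation_def)
lemma neg_mid: "carr C x \<Longrightarrow> carr C y \<Longrightarrow> cdom C x = cdom C y \<Longrightarrow> ccod C x = I \<Longrightarrow> ccod C y = I \<Longrightarrow>
  ccomp C neg (mid C op x y) = mid C op (ccomp C neg x) (ccomp C neg y)"
  using NG unfolding is_negation_def hom_def by metis

lemma univ: "\<forall>P A m xa xb. mconvex_body C A m \<and> hom C xa P A \<and> hom C xb P A \<longrightarrow>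
        (\<exists>!h. hom C h (cprod C P I) A \<and>
           (\<forall>X p. hom C p X P \<longrightarrow>
               ccomp C h (cpair C p (cst C a X)) = ccomp C xa p \<and>
               ccomp C h (cpair C p (cst C b X)) = ccomp C xb p) \<and>
           (\<forall>X p x y. hom C p X P \<and> hom C x X I \<and> hom C y X I \<longrightarrow>
               ccomp C h (cpair C p (mid C op x y)) =
               mid C m (ccomp C h (cpair C p x)) (ccomp C h (cpair C p y))))"
  using PI unfolding param_interval_def by (elim conjE)

lemma mcv: "mconvex_body C I op" using PI by (simp add: param_interval_def)

lemma mp_laws: assumes "hom C x X I" "hom C y X I" "hom C z X I" "hom C w X I"
  shows "mid C op x x = x" "mid C op x y = mid C op y x"
    "mid C op (mid C op x y) (mid C op z w) = mid C op (mid C op x z) (mid C op y w)"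
  using mcv assms unfolding mconvex_body_def midpoint_obj_def by blast+

lemmas ts = cs op_t a_t b_t neg_t neg_ab neg_mid

lemma gen_uniq:
  assumes mc: "mconvex_body C A m" and nF: "natural C I P A F" and nG: "natural C I P A G"
    and ea: "\<And>Y p. hom C p Y P \<Longrightarrow> F p (cst C a Y) = G p (cst C a Y)"
    and eb: "\<And>Y p. hom C p Y P \<Longrightarrow> F p (cst C b Y) = G p (cst C b Y)"
    and hF: "\<And>Y p x y. hom C p Y P \<Longrightarrow> hom C x Y I \<Longrightarrow> hom C y Y I \<Longrightarrow> F p (mid C op x y) = mid C m (F p x) (F p y)"
    and hG: "\<And>Y p x y. hom C p Y P \<Longrightarrow> hom C x Y I \<Longrightarrow> hom C y Y I \<Longrightarrow> G p (mid C op x y) = mid C m (G p x) (G p y)"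
    and p: "hom C p X P" and x: "hom C x X I"
  shows "F p x = G p x"
proof -
  define xa where "xa = F (cid C P) (cst C a P)"
  define xb where "xb = F (cid C P) (cst C b P)"
  have idP: "hom C (cid C P) P P" by (simp add: hom_def ts)
  have caP: "hom C (cst C a P) P I" "hom C (cst C b P) P I" by (simp_all add: hom_def ts)
  have xa: "hom C xa P A" "hom C xb P A" unfolding xa_def xb_def using nF idP caP unfolding natural_def by blast+
  define Q where "Q = (\<lambda>h. hom C h (cprod C P I) A \<and>
           (\<forall>X p. hom C p X P \<longrightarrow>
               ccomp C h (cpair C p (cst C a X)) = ccomp C xa p \<and>
               ccomp C h (cpair C p (cst C b X)) = ccomp C xb p) \<and>
           (\<forall>X p x y. hom C p X P \<and> hom C x X I \<and> hom C y X I \<longrightarrow>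
               ccomp C h (cpair C p (mid C op x y)) =
               mid C m (ccomp C h (cpair C p x)) (ccomp C h (cpair C p y))))"
  have U: "\<exists>!h. Q h"
    unfolding Q_def using univ[rule_format, of A m xa P xb] mc xa by blast
  have fsP: "hom C (cfst C P I) (cprod C P I) P" "hom C (csnd C P I) (cprod C P I) I"
    by (simp_all add: hom_def ts)
  have key: "\<And>H. natural C I P A H \<Longrightarrow> (\<And>Y p. hom C p Y P \<Longrightarrow> H p (cst C a Y) = F p (cst C a Y)) \<Longrightarrow>
      (\<And>Y p. hom C p Y P \<Longrightarrow> H p (cst C b Y) = F p (cst C b Y)) \<Longrightarrow>
      (\<And>Y p x y. hom C p Y P \<Longrightarrow> hom C x Y I \<Longrightarrow> hom C y Y I \<Longrightarrow> H p (mid C op x y) = mid C m (H p x) (H p y)) \<Longrightarrow>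
      Q (H (cfst C P I) (csnd C P I))
      \<and> (\<forall>X p x. hom C p X P \<and> hom C x X I \<longrightarrow> ccomp C (H (cfst C P I) (csnd C P I)) (cpair C p x) = H p x)"
  proof -
    fix H assume nH: "natural C I P A H"
      and Ha: "\<And>Y p. hom C p Y P \<Longrightarrow> H p (cst C a Y) = F p (cst C a Y)"
      and Hb: "\<And>Y p. hom C p Y P \<Longrightarrow> H p (cst C b Y) = F p (cst C b Y)"
      and Hm: "\<And>Y p x y. hom C p Y P \<Longrightarrow> hom C x Y I \<Longrightarrow> hom C y Y I \<Longrightarrow> H p (mid C op x y) = mid C m (H p x) (H p y)"
    have ev: "ccomp C (H (cfst C P I) (csnd C P I)) (cpair C p x) = H p x" if "hom C p X P" "hom C x X I" for X p x
    proof -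
      have k: "hom C (cpair C p x) X (cprod C P I)" using that by (simp add: hom_def ts)
      have "ccomp C (H (cfst C P I) (csnd C P I)) (cpair C p x) =
          H (ccomp C (cfst C P I) (cpair C p x)) (ccomp C (csnd C P I) (cpair C p x))"
        using nH fsP k unfolding natural_def by blast
      also have "\<dots> = H p x" using that by (simp add: hom_def ts)
      finally show ?thesis .
    qed
    have Fnat: "F p (cst C c X) = ccomp C (F (cid C P) (cst C c P)) p" if "hom C p X P" "c = a \<or> c = b" for X p c
    proof -
      have "hom C (cst C c P) P I" using that caP by auto
      then have "ccomp C (F (cid C P) (cst C c P)) p = F (ccomp C (cid C P) p) (ccomp C (cst C c P) p)"
        using nF idP that unfolding natural_def by blast
      also have "\<dots> = F p (cst C c X)" using that by (auto simp: hom_def ts)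
      finally show ?thesis by simp
    qed
    show "?thesis H" unfolding Q_def
    proof (intro conjI allI impI)
      show "hom C (H (cfst C P I) (csnd C P I)) (cprod C P I) A" using nH fsP unfolding natural_def by blast
    next
      fix X p assume p: "hom C p X P"
      have ca: "hom C (cst C a X) X I" "hom C (cst C b X) X I" using p by (simp_all add: hom_def ts)
      show "ccomp C (H (cfst C P I) (csnd C P I)) (cpair C p (cst C a X)) = ccomp C xa p"
        using ev[OF p ca(1)] Ha[OF p] Fnat[OF p] unfolding xa_def by simp
      show "ccomp C (H (cfst C P I) (csnd C P I)) (cpair C p (cst C b X)) = ccomp C xb p"
        using ev[OF p ca(2)] Hb[OF p] Fnat[OF p] unfolding xb_def by simp
    next
      fix X p x y assume h: "hom C p X P \<and> hom C x X I \<and> hom C y X I"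
      have hm: "hom C (mid C op x y) X I" using h by (simp add: hom_def ts)
      show "ccomp C (H (cfst C P I) (csnd C P I)) (cpair C p (mid C op x y)) =
               mid C m (ccomp C (H (cfst C P I) (csnd C P I)) (cpair C p x)) (ccomp C (H (cfst C P I) (csnd C P I)) (cpair C p y))"
        using h hm ev Hm by metis
    next
      fix X p x assume "hom C p X P \<and> hom C x X I"
      then show "ccomp C (H (cfst C P I) (csnd C P I)) (cpair C p x) = H p x" using ev by blast
    qed
  qed
  have KF: "Q (F (cfst C P I) (csnd C P I)) \<and> (\<forall>X p x. hom C p X P \<and> hom C x X I \<longrightarrow> ccomp C (F (cfst C P I) (csnd C P I)) (cpair C p x) = F p x)"
    by (rule key[OF nF]) (simp_all add: hF ea eb)
  have KG: "Q (G (cfst C P I) (csnd C P I)) \<and> (\<forall>X p x. hom C p X P \<and> hom C x X I \<longrightarrow> ccomp C (G (cfst C P I) (csnd C P I)) (cpair C p x) = G p x)"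
    by (rule key[OF nG]) (simp_all add: hG ea eb)
  have "F (cfst C P I) (csnd C P I) = G (cfst C P I) (csnd C P I)" using U KF KG by blast
  then show ?thesis using KF KG p x by metis
qed

lemma gen_uniq2:
  assumes mc: "mconvex_body C A m" and nF: "natural C I P A F" and nG: "natural C I P A G"
    and ea: "\<And>Y p. hom C p Y P \<Longrightarrow> F p (cst C a Y) = G p (cst C a Y)"
    and eb: "\<And>Y p. hom C p Y P \<Longrightarrow> F p (cst C b Y) = G p (cst C b Y)"
    and hF: "\<And>Y p x y. hom C p Y P \<Longrightarrow> hom C x Y I \<Longrightarrow> hom C y Y I \<Longrightarrow> F p (mid C op x y) = mid C m (F p x) (F p y)"
    and hG: "\<And>Y p x y. hom C p Y P \<Longrightarrow> hom C x Y I \<Longrightarrow> hom C y Y I \<Longrightarrow> G p (mid C op x y) = mid C m (G p x) (G p y)"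
    and p: "hom C p X P" and x: "hom C x X I" and el: "F p x = l" and er: "G p x = r"
  shows "l = r"
using gen_uniq[OF mc nF nG ea eb hF hG p x] el er by simp


lemma idem: "carr C x \<Longrightarrow> ccod C x = I \<Longrightarrow> mid C op x x = x"
  using mp_laws[of x "cdom C x" x x x] by (simp add: hom_def)
lemma comm: "hom C x X I \<Longrightarrow> hom C y X I \<Longrightarrow> mid C op x y = mid C op y x"
  using mp_laws by blast
lemma medial: "hom C x X I \<Longrightarrow> hom C y X I \<Longrightarrow> hom C z X I \<Longrightarrow> hom C w X I \<Longrightarrow>
  mid C op (mid C op x y) (mid C op z w) = mid C op (mid C op x z) (mid C op y w)"
  using mp_laws by blast

lemma cst_mid: "cst C (mid C op a b) X = mid C op (cst C a X) (cst C b X)"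
  unfolding cst_def by (simp add: ts)

lemma negneg: "hom C x X I \<Longrightarrow> ccomp C neg (ccomp C neg x) = x"
  apply (rule gen_uniq2[OF mcv, where P=X and p="cid C X" and F="\<lambda>p x. ccomp C neg (ccomp C neg x)" and G="\<lambda>p x. x"])
  apply (auto simp: natural_def hom_def ts)
  done

lemma negmid0: "hom C x X I \<Longrightarrow> mid C op (ccomp C neg x) x = mid C op (cst C a X) (cst C b X)"
  apply (rule gen_uniq2[OF mcv, where P=X and p="cid C X" and F="\<lambda>p x. mid C op (ccomp C neg x) x" and G="\<lambda>p x. mid C op (cst C a (cdom C x)) (cst C b (cdom C x))"])
  apply (auto simp: natural_def hom_def ts idem)
  subgoal apply (rule comm) apply (auto simp: hom_def ts) done
  subgoal apply (rule medial) apply (auto simp: hom_def ts) done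
  done


lemma negneg': "carr C x \<Longrightarrow> ccod C x = I \<Longrightarrow> ccomp C neg (ccomp C neg x) = x"
  using negneg[of x "cdom C x"] by (simp add: hom_def)

end

locale M = L C I op a b neg for C :: "('o,'m) cat_fp" and I op a b neg +
  fixes mul
  assumes MUL: "hom C mul (cprod C I I) I \<and>
            (\<forall>X x y z. hom C x X I \<and> hom C y X I \<and> hom C z X I \<longrightarrow>
               ccomp C mul (cpair C x (cst C a X)) = ccomp C neg x \<and>
               ccomp C mul (cpair C x (cst C b X)) = x \<and>
               ccomp C mul (cpair C x (mid C op y z)) =
                 mid C op (ccomp C mul (cpair C x y)) (ccomp C mul (cpair C x z)))"
begin

lemma mul_t: "carr C mul" "cdom C mul = cprod C I I" "ccod C mul = I"
  using MUL by (auto simp: hom_def)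
lemma mul_a: "carr C x \<Longrightarrow> ccod C x = I \<Longrightarrow> cdom C x = X \<Longrightarrow> ccomp C mul (cpair C x (cst C a X)) = ccomp C neg x"
  using MUL unfolding hom_def by blast
lemma mul_b: "carr C x \<Longrightarrow> ccod C x = I \<Longrightarrow> cdom C x = X \<Longrightarrow> ccomp C mul (cpair C x (cst C b X)) = x"
  using MUL unfolding hom_def by blast
lemma mul_mid: "carr C x \<Longrightarrow> ccod C x = I \<Longrightarrow> carr C y \<Longrightarrow> ccod C y = I \<Longrightarrow> carr C z \<Longrightarrow> ccod C z = I \<Longrightarrow>
   cdom C y = cdom C x \<Longrightarrow> cdom C z = cdom C x \<Longrightarrow>
   ccomp C mul (cpair C x (mid C op y z)) = mid C op (ccomp C mul (cpair C x y)) (ccomp C mul (cpair C x z))"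
  using MUL unfolding hom_def by metis

lemmas ms = ts mul_t mul_a mul_b mul_mid negneg' idem

lemma La: "hom C x X I \<Longrightarrow> ccomp C mul (cpair C (cst C a X) x) = ccomp C neg x"
  apply (rule gen_uniq2[OF mcv, where P=X and p="cid C X" and F="\<lambda>p x. ccomp C mul (cpair C (cst C a (cdom C x)) x)" and G="\<lambda>p x. ccomp C neg x"])
  apply (auto simp: natural_def hom_def ms)
  done
lemma Lb: "hom C x X I \<Longrightarrow> ccomp C mul (cpair C (cst C b X) x) = x"
  apply (rule gen_uniq2[OF mcv, where P=X and p="cid C X" and F="\<lambda>p x. ccomp C mul (cpair C (cst C b (cdom C x)) x)" and G="\<lambda>p x. x"])
  apply (auto simp: natural_def hom_def ms)
  done
lemma La': "carr C x \<Longrightarrow> ccod C x = I \<Longrightarrow> cdom C x = X \<Longrightarrow> ccomp C mul (cpair C (cst C a X) x) = ccomp C neg x"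
  using La[of x X] by (simp add: hom_def)
lemma Lb': "carr C x \<Longrightarrow> ccod C x = I \<Longrightarrow> cdom C x = X \<Longrightarrow> ccomp C mul (cpair C (cst C b X) x) = x"
  using Lb[of x X] by (simp add: hom_def)

lemma negR: "hom C x X I \<Longrightarrow> hom C y X I \<Longrightarrow> ccomp C mul (cpair C x (ccomp C neg y)) = ccomp C neg (ccomp C mul (cpair C x y))"
  apply (rule gen_uniq2[OF mcv, where P=X and p="cid C X" and x=y and F="\<lambda>p y. ccomp C mul (cpair C (ccomp C x p) (ccomp C neg y))" and G="\<lambda>p y. ccomp C neg (ccomp C mul (cpair C (ccomp C x p) y))"])
  apply (auto simp: natural_def hom_def ms)
  done
lemma negR': "carr C x \<Longrightarrow> ccod C x = I \<Longrightarrow> carr C y \<Longrightarrow> ccod C y = I \<Longrightarrow> cdom C y = cdom C x \<Longrightarrow>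
   ccomp C mul (cpair C x (ccomp C neg y)) = ccomp C neg (ccomp C mul (cpair C x y))"
  using negR[of x "cdom C x" y] by (simp add: hom_def)

lemma leftlin: "hom C x X I \<Longrightarrow> hom C y X I \<Longrightarrow> hom C z X I \<Longrightarrow>
  ccomp C mul (cpair C (mid C op y z) x) = mid C op (ccomp C mul (cpair C y x)) (ccomp C mul (cpair C z x))"
  apply (rule gen_uniq2[OF mcv, where P=X and p="cid C X" and F="\<lambda>p x. ccomp C mul (cpair C (mid C op (ccomp C y p) (ccomp C z p)) x)" and G="\<lambda>p x. mid C op (ccomp C mul (cpair C (ccomp C y p) x)) (ccomp C mul (cpair C (ccomp C z p) x))"])
  apply (auto simp: natural_def hom_def ms)
  subgoal apply (rule medial) apply (auto simp: hom_def ms) done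
  done
lemma leftlin': "carr C x \<Longrightarrow> ccod C x = I \<Longrightarrow> carr C y \<Longrightarrow> ccod C y = I \<Longrightarrow> carr C z \<Longrightarrow> ccod C z = I \<Longrightarrow>
   cdom C y = cdom C x \<Longrightarrow> cdom C z = cdom C x \<Longrightarrow>
  ccomp C mul (cpair C (mid C op y z) x) = mid C op (ccomp C mul (cpair C y x)) (ccomp C mul (cpair C z x))"
  using leftlin[of x "cdom C x" y z] by (simp add: hom_def)

lemma mcomm: "hom C x X I \<Longrightarrow> hom C y X I \<Longrightarrow> ccomp C mul (cpair C x y) = ccomp C mul (cpair C y x)"
  apply (rule gen_uniq2[OF mcv, where P=X and p="cid C X" and x=y and F="\<lambda>p y. ccomp C mul (cpair C (ccomp C x p) y)" and G="\<lambda>p y. ccomp C mul (cpair C y (ccomp C x p))"])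
  apply (auto simp: natural_def hom_def ms La' Lb' leftlin')
  done

lemma massoc: "hom C x X I \<Longrightarrow> hom C y X I \<Longrightarrow> hom C z X I \<Longrightarrow>
  ccomp C mul (cpair C (ccomp C mul (cpair C x y)) z) = ccomp C mul (cpair C x (ccomp C mul (cpair C y z)))"
  apply (rule gen_uniq2[OF mcv, where P=X and p="cid C X" and x=z and F="\<lambda>p z. ccomp C mul (cpair C (ccomp C mul (cpair C (ccomp C x p) (ccomp C y p))) z)" and G="\<lambda>p z. ccomp C mul (cpair C (ccomp C x p) (ccomp C mul (cpair C (ccomp C y p) z)))"])
  apply (auto simp: natural_def hom_def ms negR')
  done

lemma mzero: "hom C x X I \<Longrightarrow> ccomp C mul (cpair C x (cst C (mid C op a b) X)) = cst C (mid C op a b) X"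
  using negmid0[of x X] by (simp add: cst_mid hom_def ms)

end
theorem mainTheorem4:
  fixes C :: "('o,'m) cat_fp" and I :: 'o and op a b neg :: 'm
  assumes "cat_fp C"
    and "param_interval C I op a b"
    and "is_negation C I op a b neg"
  shows "(\<exists>!mul. hom C mul (cprod C I I) I \<and>
            (\<forall>X x y z. hom C x X I \<and> hom C y X I \<and> hom C z X I \<longrightarrow>
               ccomp C mul (cpair C x (cst C a X)) = ccomp C neg x \<and>
               ccomp C mul (cpair C x (cst C b X)) = x \<and>
               ccomp C mul (cpair C x (mid C op y z)) =
                 mid C op (ccomp C mul (cpair C x y)) (ccomp C mul (cpair C x z)))) \<and>
         (\<forall>mul. hom C mul (cprod C I I) I \<and>
            (\<forall>X x y z. hom C x X I \<and> hom C y X I \<and> hom C z X I \<longrightarrow>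
               ccomp C mul (cpair C x (cst C a X)) = ccomp C neg x \<and>
               ccomp C mul (cpair C x (cst C b X)) = x \<and>
               ccomp C mul (cpair C x (mid C op y z)) =
                 mid C op (ccomp C mul (cpair C x y)) (ccomp C mul (cpair C x z)))
          \<longrightarrow>
            (\<forall>X x y z. hom C x X I \<and> hom C y X I \<and> hom C z X I \<longrightarrow>
               ccomp C mul (cpair C x (cst C (mid C op a b) X)) = cst C (mid C op a b) X \<and>
               ccomp C mul (cpair C x y) = ccomp C mul (cpair C y x) \<and>
               ccomp C mul (cpair C (ccomp C mul (cpair C x y)) z) =
                 ccomp C mul (cpair C x (ccomp C mul (cpair C y z)))))"
proof -
  interpret L C I op a b neg using assms by (unfold_locales; simp)
  let ?S = "\<lambda>mul. hom C mul (cprod C I I) I \<and>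
            (\<forall>X x y z. hom C x X I \<and> hom C y X I \<and> hom C z X I \<longrightarrow>
               ccomp C mul (cpair C x (cst C a X)) = ccomp C neg x \<and>
               ccomp C mul (cpair C x (cst C b X)) = x \<and>
               ccomp C mul (cpair C x (mid C op y z)) =
                 mid C op (ccomp C mul (cpair C x y)) (ccomp C mul (cpair C x z)))"
  let ?Q = "\<lambda>h. hom C h (cprod C I I) I \<and>
           (\<forall>X p. hom C p X I \<longrightarrow>
               ccomp C h (cpair C p (cst C a X)) = ccomp C neg p \<and>
               ccomp C h (cpair C p (cst C b X)) = ccomp C (cid C I) p) \<and>
           (\<forall>X p x y. hom C p X I \<and> hom C x X I \<and> hom C y X I \<longrightarrow>
               ccomp C h (cpair C p (mid C op x y)) =
               mid C op (ccomp C h (cpair C p x)) (ccomp C h (cpair C p y)))"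
  have hn: "hom C neg I I" "hom C (cid C I) I I" by (simp_all add: hom_def ts)
  have U: "\<exists>!h. ?Q h" using univ[rule_format, of I op neg I "cid C I"] mcv hn by blast
  have idc: "\<And>p X. hom C p X I \<Longrightarrow> ccomp C (cid C I) p = p" by (simp add: hom_def ts)
  have eq: "?Q h = ?S h" for h
  proof
    assume "?Q h" then show "?S h" using idc by simp
  next
    assume S: "?S h"
    show "?Q h"
    proof (intro conjI allI impI)
      show "hom C h (cprod C I I) I" using S by blast
    next
      fix X p assume "hom C p X I"
      then show "ccomp C h (cpair C p (cst C a X)) = ccomp C neg p"
        "ccomp C h (cpair C p (cst C b X)) = ccomp C (cid C I) p" using S idc by metis+
    next
      fix X p x y assume "hom C p X I \<and> hom C x X I \<and> hom C y X I"
      then show "ccomp C h (cpair C p (mid C op x y)) =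
               mid C op (ccomp C h (cpair C p x)) (ccomp C h (cpair C p y))" using S by blast
    qed
  qed
  have P1: "\<exists>!mul. ?S mul" using U eq by simp
  have P2: "\<forall>mul. ?S mul \<longrightarrow>
            (\<forall>X x y z. hom C x X I \<and> hom C y X I \<and> hom C z X I \<longrightarrow>
               ccomp C mul (cpair C x (cst C (mid C op a b) X)) = cst C (mid C op a b) X \<and>
               ccomp C mul (cpair C x y) = ccomp C mul (cpair C y x) \<and>
               ccomp C mul (cpair C (ccomp C mul (cpair C x y)) z) =
                 ccomp C mul (cpair C x (ccomp C mul (cpair C y z))))"
  proof (intro allI impI)
    fix mul X x y z assume S: "?S mul" and h: "hom C x X I \<and> hom C y X I \<and> hom C z X I"
    interpret M C I op a b neg mul using S by (unfold_locales; simp)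
    show "ccomp C mul (cpair C x (cst C (mid C op a b) X)) = cst C (mid C op a b) X \<and>
               ccomp C mul (cpair C x y) = ccomp C mul (cpair C y x) \<and>
               ccomp C mul (cpair C (ccomp C mul (cpair C x y)) z) =
                 ccomp C mul (cpair C x (ccomp C mul (cpair C y z)))"
      using h mzero mcomm massoc by blast
  qed
  show ?thesis using P1 P2 by blast
qed

end
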